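(* SeqPAV satisfies $\kappa$-group representation for $\kappa(\alpha,\lambda)=\lceil \frac{2(\lambda+1)^2}{\alpha^2}\rceil$. That is, for every rational $\alpha\in(0,1]$, every $\lambda\in\mathbb N$, every profile $P$, every ranking $r$ that SeqPAV may output on $P$ (under any tie-breaking), and every group $N'$ that is $(\alpha,\lambda)$-significant in $P$, we have $\mathrm{avg}(N',r_{\le k})\ge\lambda$ where $k=\lceil \frac{2(\lambda+1)^2}{\alpha^2}\rceil$.
   Context: Let $N=[n]$ be a finite set of voters and $A$ a finite set of $m$ alternatives; a profile $P=(A_1,\dots,A_n)$ gives each voter $i$ a non-empty approval set $A_i\subseteq A$. A ranking $r=(r_1,\dots,r_m)$ is a linear order of $A$, $r_{\le k}=\{r_1,\dots,r_k\}$, with $r_{\le k}=A$ for $k\ge m$. For nonempty $N'\subseteq N$ and $S\subseteq A$, $\mathrm{avg}(N',S)=\frac1{|N'|}\sum_{i\in N'}|A_i\cap S|$. The cohesiveness of $N'$ is $\lambda(N')=|\bigcap_{i\in N'}A_i|$; $N'$ is $(\alpha,\lambda)$-significant in $P$ if $|N'|=\lceil\alpha n\rceil$ and $\lambda(N')\ge\lambda$. For a weight vector $\mathbf w=(w_1,w_2,\dots)$ of nonnegative reals and $S\subseteq A$, let $w(S)=\sum_{i\in N}\sum_{j=1}^{|A_i\cap S|}w_j$. The rule $\mathbf w$-RAV builds $r$ iteratively from the empty ranking: at step $k\in[m]$ it appends an unranked alternative $a$ maximizing $w(r_{\le k-1}\cup\{a\})-w(r_{\le k-1})$ (ties broken arbitrarily).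 SeqPAV is $\mathbf w$-RAV with $\mathbf w=(1,\frac12,\frac13,\dots)$. *)

theory Defs
  imports "HOL-Analysis.Analysis"
begin

text \<open>A ranking is a list enumerating A without repetition;
its prefix of length k is set (take k r) (equal to A when k is at least m).\<close>

definition is_profile :: "'v set \<Rightarrow> 'a set \<Rightarrow> ('v \<Rightarrow> 'a set) \<Rightarrow> bool" where
  "is_profile N A P \<longleftrightarrow> finite N \<and> N \<noteq> {} \<and> finite A \<and>
     (\<forall>i\<in>N. P i \<noteq> {} \<and> P i \<subseteq> A)"

definition is_ranking :: "'a set \<Rightarrow> 'a list \<Rightarrow> bool" where
  "is_ranking A r \<longleftrightarrow> distinct r \<and> set r = A"

definition prefix_set :: "'a list \<Rightarrow> nat \<Rightarrow> 'a set" where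
  "prefix_set r k = set (take k r)"

definition avg :: "('v \<Rightarrow> 'a set) \<Rightarrow> 'v set \<Rightarrow> 'a set \<Rightarrow> real" where
  "avg P N' S = (\<Sum>i\<in>N'. real (card (P i \<inter> S))) / real (card N')"

definition cohesiveness :: "('v \<Rightarrow> 'a set) \<Rightarrow> 'v set \<Rightarrow> nat" where
  "cohesiveness P N' = card (\<Inter>i\<in>N'. P i)"

definition significant ::
  "'v set \<Rightarrow> ('v \<Rightarrow> 'a set) \<Rightarrow> real \<Rightarrow> nat \<Rightarrow> 'v set \<Rightarrow> bool" where
  "significant N P \<alpha> lam N' \<longleftrightarrow> N' \<subseteq> N \<and> N' \<noteq> {} \<and>
     int (card N') = \<lceil>\<alpha> * real (card N)\<rceil> \<and> cohesiveness P N' \<ge> lam"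

text \<open>w(S) for a weight vector w indexed from 1 (w 1 = w_1, ...).\<close>
definition wscore :: "(nat \<Rightarrow> real) \<Rightarrow> 'v set \<Rightarrow> ('v \<Rightarrow> 'a set) \<Rightarrow> 'a set \<Rightarrow> real" where
  "wscore w N P S = (\<Sum>i\<in>N. \<Sum>j=1..card (P i \<inter> S). w j)"

text \<open>r is a possible output of w-RAV (for some tie-breaking): at every step k+1 the
appended alternative maximizes the marginal gain among the unranked alternatives.\<close>
definition wrav_output ::
  "(nat \<Rightarrow> real) \<Rightarrow> 'v set \<Rightarrow> 'a set \<Rightarrow> ('v \<Rightarrow> 'a set) \<Rightarrow> 'a list \<Rightarrow> bool" where
  "wrav_output w N A P r \<longleftrightarrow> is_ranking A r \<and>
     (\<forall>k < length r. \<forall>a \<in> A - set (take k r).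
        wscore w N P (set (take k r) \<union> {a}) - wscore w N P (set (take k r))
        \<le> wscore w N P (set (take k r) \<union> {r ! k}) - wscore w N P (set (take k r)))"

definition pav_weights :: "nat \<Rightarrow> real" where
  "pav_weights j = 1 / real j"

definition seqpav_output :: "'v set \<Rightarrow> 'a set \<Rightarrow> ('v \<Rightarrow> 'a set) \<Rightarrow> 'a list \<Rightarrow> bool" where
  "seqpav_output = wrav_output pav_weights"

end

theory Submission
  imports Defs
begin

lemma harm_sqrt: "(\<Sum>j=1..c. pav_weights j) \<le> sqrt (2 * real c)"
proof (induction c)
  case 0 then show ?case by simp
next
  case (Suc c)
  have step: "sqrt (2 * real c) + 1 / (real c + 1) \<le> sqrt (2 * (real c + 1))"
  proof (cases "c = 0")
    case True then show ?thesis by simp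
  next
    case False
    define a where "a = sqrt (2 * real c)"
    define b where "b = sqrt (2 * (real c + 1))"
    have a0: "a \<ge> 0" "b > 0" unfolding a_def b_def by auto
    have ab: "b^2 - a^2 = 2" unfolding a_def b_def by simp
    have aleb: "a \<le> b" unfolding a_def b_def by simp
    have bc: "b \<le> real c + 1"
    proof -
      have c1: "(1::real) \<le> real c" using False by simp
      have "1*1 \<le> real c * real c" by (rule mult_mono) (use c1 in auto)
      hence "2 * (real c + 1) \<le> (real c + 1)^2" by (simp add: power2_eq_square algebra_simps)
      then show ?thesis unfolding b_def by (simp add: real_sqrt_le_iff real_le_lsqrt)
    qed
    have "(b - a) * (a + b) = 2" using ab by (simp add: power2_eq_square algebra_simps)
    hence "(b - a) * (2*b) \<ge> 2" using aleb a0
      by (smt (verit, ccfv_threshold) mult_left_mono)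
    hence "b - a \<ge> 1 / b" using a0 by (simp add: field_simps)
    moreover have "1 / b \<ge> 1 / (real c + 1)" using bc a0 by (simp add: frac_le)
    ultimately show ?thesis unfolding a_def b_def by linarith
  qed
  have "(\<Sum>j=1..Suc c. pav_weights j) = (\<Sum>j=1..c. pav_weights j) + 1 / (real c + 1)"
    by (simp add: pav_weights_def)
  also have "\<dots> \<le> sqrt (2 * real c) + 1 / (real c + 1)" using Suc by simp
  also have "\<dots> \<le> sqrt (2 * real (Suc c))" using step by (metis add.commute of_nat_Suc)
  finally show ?case .
qed

lemma harm_mono: "a \<le> b \<Longrightarrow> (\<Sum>j=1..a. pav_weights j) \<le> (\<Sum>j=1..b. pav_weights j)"
  by (rule sum_mono2) (auto simp: pav_weights_def)

lemma gain_voter: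
  assumes "finite S" "c \<notin> S"
  shows "(\<Sum>j=1..card (X \<inter> (S \<union> {c})). pav_weights j) - (\<Sum>j=1..card (X \<inter> S). pav_weights j)
     = (if c \<in> X then 1 / (real (card (X \<inter> S)) + 1) else 0)"
proof (cases "c \<in> X")
  case True
  have "X \<inter> (S \<union> {c}) = insert c (X \<inter> S)" using True by auto
  hence "card (X \<inter> (S \<union> {c})) = Suc (card (X \<inter> S))" using assms by simp
  then show ?thesis using True by (simp add: pav_weights_def)
next
  case False
  have "X \<inter> (S \<union> {c}) = X \<inter> S" using False by auto
  then show ?thesis using False by simp
qed

lemma tangent: "L > 0 \<Longrightarrow> y > 0 \<Longrightarrow> 1 / y \<ge> (2 * L - y) / L^2" for L y :: real
proof -
  assume "L > 0" "y > 0"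
  have e: "L^2 - (2*L - y) * y = (L - y)^2" by (simp add: power2_eq_square algebra_simps)
  have "(L - y)^2 \<ge> 0" by simp
  hence "(2*L - y) * y \<le> L^2" using e by linarith
  then show ?thesis using \<open>L>0\<close> \<open>y>0\<close> by (simp add: field_simps)
qed


lemma avg_mono:
  assumes "S \<subseteq> T" "finite T"
  shows "avg P N' S \<le> avg P N' T"
  unfolding avg_def
proof (rule divide_right_mono)
  show "(\<Sum>i\<in>N'. real (card (P i \<inter> S))) \<le> (\<Sum>i\<in>N'. real (card (P i \<inter> T)))"
    by (rule sum_mono) (use assms in \<open>auto intro!: card_mono\<close>)
qed simp

lemma avg_ge:
  assumes "finite N'" "N' \<noteq> {}" "finite S" "\<forall>i\<in>N'. C \<subseteq> P i" "C \<subseteq> S" "lam \<le> card C"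
  shows "avg P N' S \<ge> real lam"
proof -
  have "(\<Sum>i\<in>N'. real lam) \<le> (\<Sum>i\<in>N'. real (card (P i \<inter> S)))"
  proof (rule sum_mono)
    fix i assume "i \<in> N'"
    hence "C \<subseteq> P i \<inter> S" using assms by auto
    hence "card C \<le> card (P i \<inter> S)" using assms by (intro card_mono) auto
    then show "real lam \<le> real (card (P i \<inter> S))" using assms by simp
  qed
  hence "real (card N') * real lam \<le> (\<Sum>i\<in>N'. real (card (P i \<inter> S)))" by simp
  moreover have "card N' > 0" using assms by (simp add: card_gt_0_iff)
  ultimately show ?thesis unfolding avg_def by (simp add: field_simps)
qed

lemma wscore_pav: "wscore pav_weights N P S = (\<Sum>i\<in>N. \<Sum>j=1..card (P i \<inter> S). pav_weights j)"
  by (simp add: wscore_def)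

theorem theorem4:
  fixes N :: "'v set" and A :: "'a set" and P :: "'v \<Rightarrow> 'a set"
    and r :: "'a list" and \<alpha> :: real and lam :: nat and N' :: "'v set"
  assumes "\<alpha> \<in> \<rat>" and "0 < \<alpha>" and "\<alpha> \<le> 1"
    and "is_profile N A P"
    and "seqpav_output N A P r"
    and "significant N P \<alpha> lam N'"
  shows "avg P N' (prefix_set r (nat \<lceil>2 * (real lam + 1)^2 / \<alpha>^2\<rceil>)) \<ge> real lam"
proof (rule ccontr)
  assume neg: "\<not> ?thesis"
  define k where "k = nat \<lceil>2 * (real lam + 1)^2 / \<alpha>^2\<rceil>"
  define S where "S t = set (take t r)" for t
  define L where "L = real lam + 1"
  define W where "W X = wscore pav_weights N P X" for X
  have L0: "L > 0" unfolding L_def by simp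
  have rank: "distinct r" "set r = A" using assms(5)
    unfolding seqpav_output_def wrav_output_def is_ranking_def by auto
  have greedy: "\<And>t a. t < length r \<Longrightarrow> a \<in> A - S t \<Longrightarrow>
      W (S t \<union> {a}) - W (S t) \<le> W (S t \<union> {r ! t}) - W (S t)"
    using assms(5) unfolding seqpav_output_def wrav_output_def W_def S_def by blast
  have finN: "finite N" "N \<noteq> {}" "finite A" and PA: "\<And>i. i \<in> N \<Longrightarrow> P i \<subseteq> A"
    using assms(4) unfolding is_profile_def by auto
  have N'N: "N' \<subseteq> N" "N' \<noteq> {}" and cardN': "int (card N') = \<lceil>\<alpha> * real (card N)\<rceil>"
    and coh: "lam \<le> card (\<Inter>i\<in>N'. P i)"
    using assms(6) unfolding significant_def cohesiveness_def by auto
  have finN': "finite N'" using N'N finN finite_subset by blast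
  have n'pos: "card N' > 0" using finN' N'N by (simp add: card_gt_0_iff)
  define C where "C = (\<Inter>i\<in>N'. P i)"
  have CP: "\<forall>i\<in>N'. C \<subseteq> P i" unfolding C_def by auto
  have CA: "C \<subseteq> A" using N'N PA CP by blast
  have finS: "\<And>t. finite (S t)" unfolding S_def by simp
  have avgk: "avg P N' (S k) < real lam" using neg by (simp add: prefix_set_def S_def k_def)
  have klen: "k \<le> length r"
  proof (rule ccontr)
    assume "\<not> k \<le> length r"
    hence "S k = A" unfolding S_def using rank by simp
    hence "avg P N' (S k) \<ge> real lam"
      using avg_ge[OF finN' N'N(2) finS CP] CA coh C_def by auto
    with avgk show False by simp
  qed
  have gain: "W (S (Suc t)) - W (S t) > real (card N') / L" if tk: "t < k" for t
  proof -
    have tlen: "t < length r" using tk klen by simp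
    have SSuc: "S (Suc t) = S t \<union> {r ! t}" unfolding S_def using tlen
      by (simp add: take_Suc_conv_app_nth)
    have "S t \<subseteq> S k" unfolding S_def by (rule set_take_subset_set_take) (use tk in simp)
    hence avgt: "avg P N' (S t) < real lam"
      using avg_mono[of "S t" "S k" P N'] finS[of k] avgk by linarith
    have "\<not> C \<subseteq> S t"
    proof
      assume "C \<subseteq> S t"
      hence "avg P N' (S t) \<ge> real lam"
        using avg_ge[OF finN' N'N(2) finS CP] coh unfolding C_def by blast
      with avgt show False by simp
    qed
    then obtain c where c: "c \<in> C" "c \<notin> S t" by blast
    have cA: "c \<in> A - S t" using c CA by auto
    have gc: "W (S t \<union> {c}) - W (S t) =
        (\<Sum>i\<in>N. if c \<in> P i then 1 / (real (card (P i \<inter> S t)) + 1) else 0)"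
      unfolding W_def wscore_def sum_subtractf[symmetric]
      by (rule sum.cong, rule refl, rule gain_voter[OF finS c(2)])
    have "(\<Sum>i\<in>N'. 1 / (real (card (P i \<inter> S t)) + 1))
        = (\<Sum>i\<in>N'. if c \<in> P i then 1 / (real (card (P i \<inter> S t)) + 1) else 0)"
      using CP c by (intro sum.cong) auto
    also have "\<dots> \<le> (\<Sum>i\<in>N. if c \<in> P i then 1 / (real (card (P i \<inter> S t)) + 1) else 0)"
      by (rule sum_mono2) (use finN N'N in auto)
    finally have g1: "(\<Sum>i\<in>N'. 1 / (real (card (P i \<inter> S t)) + 1)) \<le> W (S t \<union> {c}) - W (S t)"
      using gc by simp
    define n where "n = real (card N')"
    define av where "av = avg P N' (S t)"
    have T1: "(\<Sum>i\<in>N'. (2 * L - (real (card (P i \<inter> S t)) + 1)) / L^2)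
        \<le> (\<Sum>i\<in>N'. 1 / (real (card (P i \<inter> S t)) + 1))"
      by (rule sum_mono) (rule tangent[OF L0], simp)
    have "(\<Sum>i\<in>N'. (2 * L - (real (card (P i \<inter> S t)) + 1)) / L^2)
        = (2 * L * n - (\<Sum>i\<in>N'. real (card (P i \<inter> S t))) - n) / L^2"
      unfolding n_def by (simp add: sum_divide_distrib[symmetric] sum_subtractf sum.distrib)
    moreover have "(\<Sum>i\<in>N'. real (card (P i \<inter> S t))) = n * av"
      unfolding avg_def n_def av_def using n'pos by simp
    ultimately have T2: "(\<Sum>i\<in>N'. (2 * L - (real (card (P i \<inter> S t)) + 1)) / L^2)
        = (2 * L * n - n * av - n) / L^2" by simp
    have "n * av + n < n * L"
      using avgt n'pos unfolding L_def n_def av_def by (simp add: algebra_simps)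
    hence "n * L < 2 * L * n - n * av - n" by (simp add: algebra_simps)
    hence "n * L / L^2 < (2 * L * n - n * av - n) / L^2"
      using L0 by (intro divide_strict_right_mono) auto
    moreover have "n * L / L^2 = n / L" using L0 by (simp add: power2_eq_square)
    ultimately have "(\<Sum>i\<in>N'. 1 / (real (card (P i \<inter> S t)) + 1)) > real (card N') / L"
      using T1 T2 unfolding n_def by linarith
    with g1 greedy[OF tlen cA] SSuc show ?thesis by simp
  qed
  have k0: "k > 0" unfolding k_def using assms(2) by simp
  have "(\<Sum>t<k. real (card N') / L) < (\<Sum>t<k. W (S (Suc t)) - W (S t))"
    by (rule sum_strict_mono) (use k0 gain in auto)
  also have "\<dots> = W (S k) - W (S 0)" by (rule sum_lessThan_telescope)
  also have "W (S 0) = 0" unfolding W_def wscore_def S_def by simp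
  finally have lower: "k * real (card N') / L < W (S k)" by simp
  have "W (S k) \<le> (\<Sum>i\<in>N. sqrt (2 * real k))"
    unfolding W_def wscore_def
  proof (rule sum_mono)
    fix i assume "i \<in> N"
    have "card (P i \<inter> S k) \<le> card (S k)" using finS by (intro card_mono) auto
    also have "\<dots> \<le> k" unfolding S_def by (metis card_length length_take min.bounded_iff)
    finally have ck: "card (P i \<inter> S k) \<le> k" .
    show "(\<Sum>j=1..card (P i \<inter> S k). pav_weights j) \<le> sqrt (2 * real k)"
      using harm_mono[OF ck] harm_sqrt[of k] by linarith
  qed
  hence upper: "W (S k) \<le> card N * sqrt (2 * real k)" by simp
  have nN: "real (card N) > 0" using finN by (simp add: card_gt_0_iff)
  have "\<alpha> * real (card N) \<le> real (card N')" using cardN' by linarith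
  hence "k * (\<alpha> * real (card N)) / L \<le> k * real (card N') / L"
    using L0 by (intro divide_right_mono mult_left_mono) auto
  hence "k * \<alpha> * real (card N) / L < card N * sqrt (2 * real k)"
    using lower upper by (simp add: mult.assoc)
  hence "real (card N) * (k * \<alpha> / L) < real (card N) * sqrt (2 * real k)"
    by (simp add: algebra_simps)
  hence ineq: "k * \<alpha> / L < sqrt (2 * real k)" using nN
    by (meson mult_less_cancel_left_pos)
  have pos: "k * \<alpha> / L \<ge> 0" using assms(2) L0 by simp
  hence "(k * \<alpha> / L)^2 < (sqrt (2 * real k))^2"
    using ineq by (intro power_strict_mono) auto
  hence "(k * \<alpha> / L)^2 < 2 * real k" by simp
  hence "real k * real k * \<alpha>^2 < 2 * real k * L^2" using L0
    by (simp add: field_simps power2_eq_square)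
  hence kl: "real k * \<alpha>^2 < 2 * L^2" using k0 by (simp add: mult.assoc)
  have "real k \<ge> 2 * L^2 / \<alpha>^2" unfolding k_def L_def by linarith
  hence "real k * \<alpha>^2 \<ge> 2 * L^2" using assms(2) by (simp add: field_simps)
  with kl show False by simp
qed

end
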